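(* For every $\alpha\in(0,1)$, neither $\overline{D}_\alpha^{\mathrm{test}}$ nor $\hat D_\alpha^{\mathrm{test}}$ is a quantum Rényi $\alpha$-divergence; that is, for each of these two functions (defined on $\bigcup_{d\in\mathbb N}\mathcal S(\mathbb C^d)\times\mathcal S(\mathbb C^d)$), it is not the case that it is both invariant under isometries and equal to the classical Rényi $\alpha$-divergence on every pair of commuting states.
   Context: $\mathcal S(\mathbb C^d)$ denotes the set of density operators on $\mathbb C^d$. A function $D^q_\alpha$ on $\bigcup_d\mathcal S(\mathbb C^d)\times\mathcal S(\mathbb C^d)$ is a quantum Rényi $\alpha$-divergence if $D_\alpha^q(V\varrho V^*\|V\sigma V^* )=D^q_\alpha(\varrho\|\sigma)$ for all isometries $V:\mathbb C^d\to\mathbb C^{d'}$, and whenever $\varrho=\sum_i p_i|i\rangle\langle i|$, $\sigma=\sum_i q_i|i\rangle\langle i|$ are diagonal in a common orthonormal basis, $D^q_\alpha(\varrho\|\sigma)=\frac{1}{\alpha-1}\log\sum_i p_i^\alpha q_i^{1-\alpha}$. A test is an operator $0\le T\le I$; $\mathcal T(X):=(\operatorname{Tr}XT,\operatorname{Tr}X(I-T))$; $D_\alpha^{\mathrm{test}}(\varrho\|\sigma):=\max_{0\le T\le I}D_\alpha(\mathcal T(\varrho)\|\mathcal T(\sigma))$ with $D_\alpha$ the classical Rényi divergence of the two-point distributions; $\overline{D}_\alpha^{\mathrm{test}}(\varrho\|\sigma):=\limsup_{n}\frac1n D_\alpha^{\mathrm{test}}(\varrho^{\otimes n}\|\sigma^{\otimes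 n})$ and $\hat D_\alpha^{\mathrm{test}}(\varrho\|\sigma):=\sup_{n}\frac1n D_\alpha^{\mathrm{test}}(\varrho^{\otimes n}\|\sigma^{\otimes n})$. *)

theory Defs
  imports "Jordan_Normal_Form.Schur_Decomposition" "HOL-Library.Extended_Real"
    "HOL-Library.Liminf_Limsup"
begin

definition mtrace :: "complex mat \<Rightarrow> complex" where
  "mtrace A = (\<Sum>i<dim_row A. A $$ (i, i))"

definition psd :: "nat \<Rightarrow> complex mat \<Rightarrow> bool" where
  "psd d A \<longleftrightarrow> A \<in> carrier_mat d d \<and>
     (\<forall>v \<in> carrier_vec d. Im (conjugate v \<bullet> (A *\<^sub>v v)) = 0 \<and> 0 \<le> Re (conjugate v \<bullet> (A *\<^sub>v v)))"

definition density :: "nat \<Rightarrow> complex mat \<Rightarrow> bool" where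
  "density d \<rho> \<longleftrightarrow> psd d \<rho> \<and> mtrace \<rho> = 1"

definition isometry :: "nat \<Rightarrow> nat \<Rightarrow> complex mat \<Rightarrow> bool" where
  "isometry d' d V \<longleftrightarrow> V \<in> carrier_mat d' d \<and> mat_adjoint V * V = 1\<^sub>m d"

definition unitary_mat :: "nat \<Rightarrow> complex mat \<Rightarrow> bool" where
  "unitary_mat d U \<longleftrightarrow> U \<in> carrier_mat d d \<and> mat_adjoint U * U = 1\<^sub>m d"

definition prob_vec :: "nat \<Rightarrow> (nat \<Rightarrow> real) \<Rightarrow> bool" where
  "prob_vec d p \<longleftrightarrow> (\<forall>i<d. 0 \<le> p i) \<and> (\<Sum>i<d. p i) = 1"

definition classical_renyi :: "real \<Rightarrow> nat \<Rightarrow> (nat \<Rightarrow> real) \<Rightarrow> (nat \<Rightarrow> real) \<Rightarrow> ereal" where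
  "classical_renyi \<alpha> n p q =
     (let s = (\<Sum>i<n. p i powr \<alpha> * q i powr (1 - \<alpha>))
      in if s = 0 then \<infinity> else ereal (ln s / (\<alpha> - 1)))"

text \<open>Quantum Renyi alpha-divergence: isometry invariance plus agreement with the classical
  divergence on pairs of states diagonal in a common orthonormal basis.\<close>
definition is_quantum_renyi :: "real \<Rightarrow> (complex mat \<Rightarrow> complex mat \<Rightarrow> ereal) \<Rightarrow> bool" where
  "is_quantum_renyi \<alpha> D \<longleftrightarrow>
     (\<forall>d d' V \<rho> \<sigma>. isometry d' d V \<and> density d \<rho> \<and> density d \<sigma> \<longrightarrow>
        D (V * \<rho> * mat_adjoint V) (V * \<sigma> * mat_adjoint V) = D \<rho> \<sigma>) \<and>
     (\<forall>d U p q. unitary_mat d U \<and> prob_vec d p \<and> prob_vec d q \<longrightarrow>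
        D (U * mat_diag d (\<lambda>i. complex_of_real (p i)) * mat_adjoint U)
          (U * mat_diag d (\<lambda>i. complex_of_real (q i)) * mat_adjoint U)
        = classical_renyi \<alpha> d p q)"

definition is_test :: "nat \<Rightarrow> complex mat \<Rightarrow> bool" where
  "is_test d T \<longleftrightarrow> psd d T \<and> psd d (1\<^sub>m d - T)"

definition two_point :: "real \<Rightarrow> real \<Rightarrow> nat \<Rightarrow> real" where
  "two_point a b = (\<lambda>i. if i = 0 then a else b)"

text \<open>Measured (test) Renyi divergence; the maximum over tests is written as a supremum.\<close>
definition D_test :: "real \<Rightarrow> complex mat \<Rightarrow> complex mat \<Rightarrow> ereal" where
  "D_test \<alpha> \<rho> \<sigma> =
     (SUP T \<in> {T. is_test (dim_row \<rho>) T}.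
        classical_renyi \<alpha> 2
          (two_point (Re (mtrace (\<rho> * T))) (Re (mtrace (\<rho> * (1\<^sub>m (dim_row \<rho>) - T)))))
          (two_point (Re (mtrace (\<sigma> * T))) (Re (mtrace (\<sigma> * (1\<^sub>m (dim_row \<rho>) - T))))))"

definition kron :: "complex mat \<Rightarrow> complex mat \<Rightarrow> complex mat" where
  "kron A B = mat (dim_row A * dim_row B) (dim_col A * dim_col B)
     (\<lambda>(i, j). A $$ (i div dim_row B, j div dim_col B) * B $$ (i mod dim_row B, j mod dim_col B))"

fun tpow :: "complex mat \<Rightarrow> nat \<Rightarrow> complex mat" where
  "tpow A 0 = 1\<^sub>m 1"
| "tpow A (Suc n) = kron (tpow A n) A"

definition D_bar :: "real \<Rightarrow> complex mat \<Rightarrow> complex mat \<Rightarrow> ereal" where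
  "D_bar \<alpha> \<rho> \<sigma> = limsup (\<lambda>n. D_test \<alpha> (tpow \<rho> n) (tpow \<sigma> n) / ereal (real n))"

definition D_hat :: "real \<Rightarrow> complex mat \<Rightarrow> complex mat \<Rightarrow> ereal" where
  "D_hat \<alpha> \<rho> \<sigma> = (SUP n \<in> {1..}. D_test \<alpha> (tpow \<rho> n) (tpow \<sigma> n) / ereal (real n))"

end

theory Submission
  imports Defs
begin


lemma key_ineq:
  fixes p u c a b g :: real
  assumes p: "0 < p" "p < 1" and g: "g = max p (1-p)"
    and u: "0 < u" "u \<le> 1" and c: "0 \<le> c" "c \<le> 1"
    and a: "0 \<le> a" "a \<le> 1" and b: "0 \<le> b" "b \<le> 1"
    and h1: "c*u \<le> a" and h2: "c*u \<le> b" and h3: "(1-c)*u \<le> 1-a" and h4: "(1-c)*u \<le> 1-b"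
  shows "(1/2) * (u/2) powr g \<le> a powr p * b powr (1-p) + (1-a) powr p * (1-b) powr (1-p)"
proof -
  have gp: "p \<le> g" "1-p \<le> g" "g \<le> 1" using g p by auto
  have u2: "0 < u/2" "u/2 \<le> 1" using u by auto
  have ug1: "(u/2) powr g \<le> 1" using u2 gp by (simp add: powr_le1)
  have hp: "1/2 \<le> (1/2::real) powr p" using p powr_mono'[of p 1 "1/2::real"] by simp
  have hq: "1/2 \<le> (1/2::real) powr (1-p)" using p powr_mono'[of "1-p" 1 "1/2::real"] by simp
  have low: "(u/2) powr g \<le> x powr e" if "u/2 \<le> x" "x \<le> 1" "0 < e" "e \<le> g" for x e
  proof -
    have "(u/2) powr g \<le> (u/2) powr e" using powr_mono'[of e g "u/2"] u2 that by simp
    also have "\<dots> \<le> x powr e" using powr_mono2[of e "u/2" x] that u2 by simp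
    finally show ?thesis .
  qed
  have T1: "0 \<le> a powr p * b powr (1-p)" by simp
  have T2: "0 \<le> (1-a) powr p * (1-b) powr (1-p)" by simp
  have half_prod: "1/2 \<le> x powr p * y powr (1-p)" if "1/2 \<le> x" "1/2 \<le> y" for x y :: real
  proof -
    have e: "(1/2::real) powr p * (1/2) powr (1-p) = 1/2"
      using powr_add[of "1/2::real" p "1-p", symmetric] by simp
    have "(1/2::real) powr p * (1/2) powr (1-p) \<le> x powr p * y powr (1-p)"
      by (rule mult_mono) (use that p in \<open>auto intro: powr_mono2\<close>)
    thus ?thesis using e by simp
  qed
  consider "1/2 \<le> a" "1/2 \<le> b" | "1/2 \<le> 1-a" "1/2 \<le> 1-b" | "1/2 \<le> a" "1/2 \<le> 1-b"
    | "1/2 \<le> 1-a" "1/2 \<le> b" by linarith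
  then show ?thesis
  proof cases
    case 1
    have "1/2 \<le> a powr p * b powr (1-p)" using half_prod 1 by simp
    moreover have "(1/2) * (u/2) powr g \<le> 1/2" using ug1 by simp
    ultimately show ?thesis using T2 by linarith
  next
    case 2
    have "1/2 \<le> (1-a) powr p * (1-b) powr (1-p)" using half_prod 2 by simp
    moreover have "(1/2) * (u/2) powr g \<le> 1/2" using ug1 by simp
    ultimately show ?thesis using T1 by linarith
  next
    case 3
    have A: "1/2 * b powr (1-p) \<le> a powr p * b powr (1-p)"
      using hp powr_mono2[of p "1/2" a] 3 p by (intro mult_right_mono) auto
    have B: "1/2 * (1-a) powr p \<le> (1-a) powr p * (1-b) powr (1-p)"
      using hq powr_mono2[of "1-p" "1/2" "1-b"] 3 p by (subst mult.commute, intro mult_left_mono) auto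
    have "(u/2) powr g \<le> b powr (1-p) \<or> (u/2) powr g \<le> (1-a) powr p"
    proof (cases "1/2 \<le> c")
      case True
      have "u/2 \<le> b" using mult_right_mono[of "1/2" c u] True u h2 by linarith
      thus ?thesis using low[of b "1-p"] b p gp by auto
    next
      case False
      have "u/2 \<le> 1-a" using mult_right_mono[of "1/2" "1-c" u] False u h3 by linarith
      thus ?thesis using low[of "1-a" p] a p gp by auto
    qed
    moreover have "0 \<le> b powr (1-p)" "0 \<le> (1-a) powr p" by auto
    ultimately show ?thesis using A B by linarith
  next
    case 4
    have A: "1/2 * a powr p \<le> a powr p * b powr (1-p)"
      using hq powr_mono2[of "1-p" "1/2" b] 4 p by (subst mult.commute, intro mult_left_mono) auto
    have B: "1/2 * (1-b) powr (1-p) \<le> (1-a) powr p * (1-b) powr (1-p)"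
      using hp powr_mono2[of p "1/2" "1-a"] 4 p by (intro mult_right_mono) auto
    have "(u/2) powr g \<le> a powr p \<or> (u/2) powr g \<le> (1-b) powr (1-p)"
    proof (cases "1/2 \<le> c")
      case True
      have "u/2 \<le> a" using mult_right_mono[of "1/2" c u] True u h1 by linarith
      thus ?thesis using low[of a p] a p gp by auto
    next
      case False
      have "u/2 \<le> 1-b" using mult_right_mono[of "1/2" "1-c" u] False u h4 by linarith
      thus ?thesis using low[of "1-b" "1-p"] b p gp by auto
    qed
    moreover have "0 \<le> a powr p" "0 \<le> (1-b) powr (1-p)" by auto
    ultimately show ?thesis using A B by linarith
  qed
qed



lemma quad_unit:
  assumes T: "T \<in> carrier_mat N N" and i: "i < N"
  shows "conjugate (unit_vec N i) \<bullet> (T *\<^sub>v unit_vec N i) = (T $$ (i,i) :: complex)"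
proof -
  have c: "conjugate (unit_vec N i) = (unit_vec N i :: complex vec)"
    using i by (intro eq_vecI) auto
  have "unit_vec N i \<bullet> (T *\<^sub>v unit_vec N i) = (T *\<^sub>v unit_vec N i) $ i"
    using T i by (intro scalar_prod_left_unit) auto
  also have "\<dots> = row T i \<bullet> unit_vec N i" using T i by simp
  also have "\<dots> = T $$ (i,i)" using T i by simp
  finally show ?thesis using c by simp
qed

lemma psd_diag_nonneg:
  assumes "psd N T" "i < N"
  shows "0 \<le> Re (T $$ (i,i))"
proof -
  have "0 \<le> Re (conjugate (unit_vec N i) \<bullet> (T *\<^sub>v unit_vec N i))"
    using assms unfolding psd_def by (meson unit_vec_carrier)
  thus ?thesis using quad_unit[of T N i] assms unfolding psd_def by auto
qed

lemma test_diag: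
  assumes "is_test N T" "i < N"
  shows "0 \<le> Re (T $$ (i,i))" "Re (T $$ (i,i)) \<le> 1"
proof -
  show "0 \<le> Re (T $$ (i,i))" using assms psd_diag_nonneg unfolding is_test_def by blast
  have T: "T \<in> carrier_mat N N" using assms unfolding is_test_def psd_def by auto
  have "0 \<le> Re ((1\<^sub>m N - T) $$ (i,i))" using assms psd_diag_nonneg unfolding is_test_def by blast
  thus "Re (T $$ (i,i)) \<le> 1" using T assms(2) by simp
qed

lemma trace_diag_mult:
  assumes T: "T \<in> carrier_mat N N"
  shows "mtrace (mat_diag N g * T) = (\<Sum>i<N. g i * T $$ (i,i))"
  using T by (simp add: mat_diag_mult_left[OF T] mtrace_def)

lemma kron_diag:
  assumes d: "0 < d"
  shows "kron (mat_diag N g) (mat_diag d h) = mat_diag (N*d) (\<lambda>i. g (i div d) * h (i mod d))"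
proof (rule eq_matI)
  fix i j assume i: "i < dim_row (mat_diag (N*d) (\<lambda>i. g (i div d) * h (i mod d)))"
    and j: "j < dim_col (mat_diag (N*d) (\<lambda>i. g (i div d) * h (i mod d)))"
  have i': "i < N*d" and j': "j < N*d" using i j by (auto simp: mat_diag_def)
  have id: "i div d < N" "j div d < N" using i' j' d by (auto simp: less_mult_imp_div_less)
  have im: "i mod d < d" "j mod d < d" using d by auto
  have eq: "(i div d = j div d \<and> i mod d = j mod d) = (i = j)"
    by (metis div_mult_mod_eq)
  show "kron (mat_diag N g) (mat_diag d h) $$ (i, j) = mat_diag (N*d) (\<lambda>i. g (i div d) * h (i mod d)) $$ (i, j)"
    using i' j' id im eq unfolding kron_def mat_diag_def by auto
qed (auto simp: kron_def mat_diag_def)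

fun Fp :: "(nat \<Rightarrow> real) \<Rightarrow> nat \<Rightarrow> nat \<Rightarrow> nat \<Rightarrow> real" where
  "Fp f d 0 i = 1"
| "Fp f d (Suc n) i = Fp f d n (i div d) * f (i mod d)"

lemma tpow_diag:
  assumes d: "0 < d"
  shows "tpow (mat_diag d (\<lambda>i. complex_of_real (f i))) n = mat_diag (d^n) (\<lambda>i. complex_of_real (Fp f d n i))"
proof (induction n)
  case 0
  show ?case by (rule eq_matI) (auto simp: mat_diag_def)
next
  case (Suc n)
  show ?case using Suc kron_diag[OF d, where N="d^n"] by (simp add: mult.commute)
qed

lemma sum_divmod:
  fixes N :: nat and g h :: "nat \<Rightarrow> real"
  assumes d: "0 < d"
  shows "(\<Sum>i<N*d. g (i div d) * h (i mod d)) = (\<Sum>i<N. g i) * (\<Sum>j<d. h j :: real)"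
proof (induction N)
  case 0 then show ?case by simp
next
  case (Suc N)
  have split: "{..<Suc N * d} = {..<N*d} \<union> {N*d..<N*d+d}" by auto
  have "(\<Sum>i\<in>{N*d..<N*d+d}. g (i div d) * h (i mod d)) = (\<Sum>j<d. g ((N*d+j) div d) * h ((N*d+j) mod d))"
    using sum.shift_bounds_nat_ivl[of "\<lambda>i. g (i div d) * h (i mod d)" 0 "N*d" d]
    by (simp add: atLeast0LessThan add.commute)
  also have "\<dots> = g N * (\<Sum>j<d. h j)" using d by (simp add: sum_distrib_left)
  finally have e: "(\<Sum>i\<in>{N*d..<N*d+d}. g (i div d) * h (i mod d)) = g N * (\<Sum>j<d. h j)" .
  have "(\<Sum>i<Suc N * d. g (i div d) * h (i mod d)) = (\<Sum>i<N*d. g (i div d) * h (i mod d)) + (\<Sum>i\<in>{N*d..<N*d+d}. g (i div d) * h (i mod d))"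
    unfolding split by (subst sum.union_disjoint) auto
  then show ?case using Suc e by (simp add: algebra_simps)
qed

lemma Fp_sum:
  assumes d: "0 < d"
  shows "(\<Sum>i<d^n. Fp f d n i) = (\<Sum>j<d. f j) ^ n"
proof (induction n)
  case 0 then show ?case by simp
next
  case (Suc n)
  show ?case using sum_divmod[OF d, where N="d^n" and g="Fp f d n" and h=f] Suc by (simp add: mult.commute)
qed

lemma Fp_nonneg: "(\<And>j. 0 \<le> f j) \<Longrightarrow> 0 \<le> Fp f d n i"
  by (induction n arbitrary: i) auto

lemma Fp_zero: "0 < d \<Longrightarrow> Fp f d n 0 = f 0 ^ n"
  by (induction n) auto



lemma test_bound:
  fixes P Q :: "nat \<Rightarrow> real"
  assumes al: "0 < \<alpha>" "\<alpha> < 1" and g: "g = max \<alpha> (1-\<alpha>)"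
    and N: "0 < N" and Pn: "\<And>i. 0 \<le> P i" and Qn: "\<And>i. 0 \<le> Q i"
    and Ps: "(\<Sum>i<N. P i) = 1" and Qs: "(\<Sum>i<N. Q i) = 1"
    and u: "P 0 = u" "Q 0 = u" "0 < u"
    and T: "is_test N T"
  shows "classical_renyi \<alpha> 2
          (two_point (Re (mtrace (mat_diag N (\<lambda>i. complex_of_real (P i)) * T)))
                     (Re (mtrace (mat_diag N (\<lambda>i. complex_of_real (P i)) * (1\<^sub>m N - T)))))
          (two_point (Re (mtrace (mat_diag N (\<lambda>i. complex_of_real (Q i)) * T)))
                     (Re (mtrace (mat_diag N (\<lambda>i. complex_of_real (Q i)) * (1\<^sub>m N - T)))))
        \<le> ereal (- ln ((1/2) * (u/2) powr g) / (1 - \<alpha>))"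
proof -
  have Tc: "T \<in> carrier_mat N N" using T unfolding is_test_def psd_def by auto
  have ITc: "1\<^sub>m N - T \<in> carrier_mat N N" using Tc by auto
  define t where "t i = Re (T $$ (i,i))" for i
  have t01: "0 \<le> t i" "t i \<le> 1" if "i < N" for i using test_diag[OF T that] t_def by auto
  have tr: "Re (mtrace (mat_diag N (\<lambda>i. complex_of_real (R i)) * T)) = (\<Sum>i<N. R i * t i)"
    "Re (mtrace (mat_diag N (\<lambda>i. complex_of_real (R i)) * (1\<^sub>m N - T))) = 1 - (\<Sum>i<N. R i * t i)"
    if Rs: "(\<Sum>i<N. R i) = 1" for R :: "nat \<Rightarrow> real"
  proof -
    show "Re (mtrace (mat_diag N (\<lambda>i. complex_of_real (R i)) * T)) = (\<Sum>i<N. R i * t i)"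
      unfolding trace_diag_mult[OF Tc] t_def by (simp add: Re_sum)
    have "Re (mtrace (mat_diag N (\<lambda>i. complex_of_real (R i)) * (1\<^sub>m N - T))) = (\<Sum>i<N. R i * (1 - t i))"
      unfolding trace_diag_mult[OF ITc] t_def using Tc by (simp add: Re_sum)
    also have "\<dots> = 1 - (\<Sum>i<N. R i * t i)" using Rs by (simp add: algebra_simps sum_subtractf)
    finally show "Re (mtrace (mat_diag N (\<lambda>i. complex_of_real (R i)) * (1\<^sub>m N - T))) = 1 - (\<Sum>i<N. R i * t i)" .
  qed
  define c where "c = t 0"
  have c01: "0 \<le> c" "c \<le> 1" using t01 N c_def by auto
  have bnds: "c*u \<le> (\<Sum>i<N. R i * t i)" "(1-c)*u \<le> 1 - (\<Sum>i<N. R i * t i)"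
     "0 \<le> (\<Sum>i<N. R i * t i)" "(\<Sum>i<N. R i * t i) \<le> 1"
    if Rs: "(\<Sum>i<N. R i) = 1" and Rn: "\<And>i. 0 \<le> R i" and R0: "R 0 = u" for R :: "nat \<Rightarrow> real"
  proof -
    have nn: "\<And>i. i \<in> {..<N} \<Longrightarrow> 0 \<le> R i * t i" using Rn t01 by auto
    have nn2: "\<And>i. i \<in> {..<N} \<Longrightarrow> 0 \<le> R i * (1 - t i)" using Rn t01 by auto
    have e: "1 - (\<Sum>i<N. R i * t i) = (\<Sum>i<N. R i * (1 - t i))" using Rs by (simp add: algebra_simps sum_subtractf)
    show "c*u \<le> (\<Sum>i<N. R i * t i)"
      using member_le_sum[of 0 "{..<N}" "\<lambda>i. R i * t i"] nn N R0 c_def by (auto simp: mult.commute)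
    show "(1-c)*u \<le> 1 - (\<Sum>i<N. R i * t i)"
      unfolding e using member_le_sum[of 0 "{..<N}" "\<lambda>i. R i * (1 - t i)"] nn2 N R0 c_def by (auto simp: mult.commute)
    show "0 \<le> (\<Sum>i<N. R i * t i)" using nn by (intro sum_nonneg) auto
    have "0 \<le> (\<Sum>i<N. R i * (1 - t i))" using nn2 by (intro sum_nonneg) auto
    then show "(\<Sum>i<N. R i * t i) \<le> 1" using e by linarith
  qed
  define a where "a = (\<Sum>i<N. P i * t i)"
  define b where "b = (\<Sum>i<N. Q i * t i)"
  have u1: "u \<le> 1" using member_le_sum[of 0 "{..<N}" P] Pn N Ps u by auto
  note bP = bnds[OF Ps Pn u(1), folded a_def]
  note bQ = bnds[OF Qs Qn u(2), folded b_def]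
  have K: "(1/2) * (u/2) powr g \<le> a powr \<alpha> * b powr (1-\<alpha>) + (1-a) powr \<alpha> * (1-b) powr (1-\<alpha>)"
    by (rule key_ineq[OF al g u(3) u1 c01]) (use bP bQ in auto)
  define s where "s = a powr \<alpha> * b powr (1-\<alpha>) + (1-a) powr \<alpha> * (1-b) powr (1-\<alpha>)"
  have s0: "0 < (1/2) * (u/2) powr g" using u by simp
  have sge: "(1/2) * (u/2) powr g \<le> s" using K s_def by simp
  have sum2: "(\<Sum>i<2. two_point a (1-a) i powr \<alpha> * two_point b (1-b) i powr (1 - \<alpha>)) = s"
    by (simp add: s_def two_point_def numeral_2_eq_2)
  have "classical_renyi \<alpha> 2 (two_point a (1-a)) (two_point b (1-b)) = ereal (ln s / (\<alpha> - 1))"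
    unfolding classical_renyi_def Let_def sum2 using s0 sge by auto
  also have "\<dots> \<le> ereal (- ln ((1/2) * (u/2) powr g) / (1 - \<alpha>))"
  proof -
    have "ln ((1/2) * (u/2) powr g) \<le> ln s" using s0 sge by (intro ln_mono) auto
    then have "- ln s / (1 - \<alpha>) \<le> - ln ((1/2) * (u/2) powr g) / (1 - \<alpha>)"
      using al by (intro divide_right_mono) auto
    moreover have "ln s / (\<alpha> - 1) = - ln s / (1 - \<alpha>)" using al by (simp add: field_simps)
    ultimately show ?thesis by simp
  qed
  finally show ?thesis using tr[OF Ps] tr[OF Qs] a_def b_def by simp
qed



lemma adj_one: "mat_adjoint (1\<^sub>m n :: complex mat) = 1\<^sub>m n"
  by (rule eq_matI) (auto simp: mat_adjoint_def mat_of_rows_def)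

lemma conj_one_diag: "1\<^sub>m n * mat_diag n f * mat_adjoint (1\<^sub>m n :: complex mat) = mat_diag n f"
proof -
  have "1\<^sub>m n * mat_diag n f = mat_diag n f" by (rule left_mult_one_mat[OF mat_diag_dim])
  moreover have "mat_diag n f * 1\<^sub>m n = mat_diag n f" by (rule right_mult_one_mat[OF mat_diag_dim])
  ultimately show ?thesis unfolding adj_one by simp
qed

theorem mainTheorem4:
  fixes \<alpha> :: real
  assumes "0 < \<alpha>" and "\<alpha> < 1"
  shows "\<not> is_quantum_renyi \<alpha> (D_bar \<alpha>) \<and> \<not> is_quantum_renyi \<alpha> (D_hat \<alpha>)"
proof -
  note al = assms
  define g where "g = max \<alpha> (1-\<alpha>)"
  have g1: "g < 1" "0 < g" using al g_def by auto
  define L where "L = 4 * ln 2 / (1 - g)"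
  have L0: "0 < L" using g1 by (simp add: L_def)
  define m where "m = exp (- L)"
  have m01: "0 < m" "m < 1" using L0 by (auto simp: m_def)
  define p where "p = (\<lambda>i::nat. if i = 0 then m else if i = 1 then 1 - m else (0::real))"
  define q where "q = (\<lambda>i::nat. if i = 0 then m else if i = 2 then 1 - m else (0::real))"
  define \<rho> where "\<rho> = mat_diag 3 (\<lambda>i. complex_of_real (p i))"
  define \<sigma> where "\<sigma> = mat_diag 3 (\<lambda>i. complex_of_real (q i))"
  have pn: "\<And>i. 0 \<le> p i" and qn: "\<And>i. 0 \<le> q i" using m01 by (auto simp: p_def q_def)
  have ps: "(\<Sum>i<3. p i) = 1" and qs: "(\<Sum>i<3. q i) = 1"
    by (simp_all add: p_def q_def numeral_3_eq_3)
  define \<beta> where "\<beta> = ((1+g) * ln 2 + g * L) / (1 - \<alpha>)"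
  have bound: "D_test \<alpha> (tpow \<rho> n) (tpow \<sigma> n) / ereal (real n) \<le> ereal \<beta>" if n: "1 \<le> n" for n
  proof -
    define u where "u = m ^ n"
    have u0: "0 < u" using m01 by (simp add: u_def)
    have tr: "tpow \<rho> n = mat_diag (3^n) (\<lambda>i. complex_of_real (Fp p 3 n i))"
         "tpow \<sigma> n = mat_diag (3^n) (\<lambda>i. complex_of_real (Fp q 3 n i))"
      unfolding \<rho>_def \<sigma>_def by (simp_all add: tpow_diag)
    have dr: "dim_row (tpow \<rho> n) = 3^n" unfolding tr by (simp add: mat_diag_def)
    have "D_test \<alpha> (tpow \<rho> n) (tpow \<sigma> n) \<le> ereal (- ln ((1/2) * (u/2) powr g) / (1 - \<alpha>))"
      unfolding D_test_def dr
    proof (rule SUP_least, goal_cases)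
      case (1 T)
      then have T: "T \<in> {T. is_test (3^n) T}" .
      show ?case
        unfolding tr
        by (rule test_bound[OF al g_def _ Fp_nonneg Fp_nonneg _ _ _ _ u0])
           (use T pn qn Fp_sum[of 3 p n] Fp_sum[of 3 q n] ps qs Fp_zero[of 3 p n] Fp_zero[of 3 q n] in
             \<open>auto simp: u_def p_def q_def\<close>)
    qed
    also have "- ln ((1/2) * (u/2) powr g) / (1 - \<alpha>) = (ln 2 + g * ln 2 + g * (real n * L)) / (1 - \<alpha>)"
    proof -
      have "ln u = - (real n * L)" using m01 by (simp add: u_def ln_realpow m_def)
      then have e: "ln ((1/2) * (u/2) powr g) = - ln 2 + g * (- (real n * L) - ln 2)"
        using u0 by (simp add: ln_mult ln_powr ln_div)
      show ?thesis unfolding e by (simp add: algebra_simps)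
    qed
    also have "\<dots> \<le> real n * \<beta>"
    proof -
      have "ln 2 + g * ln 2 + g * (real n * L) \<le> real n * ((1+g) * ln 2 + g * L)"
      proof -
        have "0 \<le> (real n - 1) * ((1+g) * ln 2)" using n g1 by (intro mult_nonneg_nonneg) auto
        moreover have "real n * ((1+g) * ln 2 + g * L) = (ln 2 + g * ln 2 + g * (real n * L)) + (real n - 1) * ((1+g) * ln 2)"
          by (simp add: algebra_simps)
        ultimately show ?thesis by linarith
      qed
      thus ?thesis unfolding \<beta>_def using al by (simp add: divide_right_mono)
    qed
    finally have le: "D_test \<alpha> (tpow \<rho> n) (tpow \<sigma> n) \<le> ereal (real n * \<beta>)" by simp
    have "D_test \<alpha> (tpow \<rho> n) (tpow \<sigma> n) / ereal (real n) \<le> ereal (real n * \<beta>) / ereal (real n)"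
      using le n by (intro ereal_divide_right_mono) auto
    also have "\<dots> = ereal \<beta>" using n by simp
    finally show ?thesis .
  qed
  have hat: "D_hat \<alpha> \<rho> \<sigma> \<le> ereal \<beta>"
    unfolding D_hat_def by (rule SUP_least) (use bound in auto)
  have bar: "D_bar \<alpha> \<rho> \<sigma> \<le> ereal \<beta>"
    unfolding D_bar_def by (rule Limsup_bounded, rule eventually_sequentiallyI[of 1]) (rule bound)
  have cl: "classical_renyi \<alpha> 3 p q = ereal (L / (1 - \<alpha>))"
  proof -
    have s: "(\<Sum>i<3. p i powr \<alpha> * q i powr (1 - \<alpha>)) = m"
      using m01 powr_add[of m \<alpha> "1-\<alpha>"] by (simp add: p_def q_def numeral_3_eq_3)
    have "ln m / (\<alpha> - 1) = L / (1 - \<alpha>)" using al by (simp add: m_def field_simps)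
    thus ?thesis unfolding classical_renyi_def Let_def s using m01 by simp
  qed
  have blt: "\<beta> < L / (1 - \<alpha>)"
  proof -
    have "(1+g) * ln 2 < (1 - g) * L" using g1 by (simp add: L_def)
    then have "(1+g) * ln 2 + g * L < L" by (simp add: algebra_simps)
    thus ?thesis unfolding \<beta>_def using al by (simp add: divide_strict_right_mono)
  qed
  have un: "unitary_mat 3 (1\<^sub>m 3 :: complex mat)" by (simp add: unitary_mat_def adj_one)
  have pv: "prob_vec 3 p" "prob_vec 3 q" using pn qn ps qs by (auto simp: prob_vec_def)
  have notQ: "\<not> is_quantum_renyi \<alpha> D" if "D \<rho> \<sigma> \<le> ereal \<beta>" for D
  proof
    assume "is_quantum_renyi \<alpha> D"
    then have "D (1\<^sub>m 3 * mat_diag 3 (\<lambda>i. complex_of_real (p i)) * mat_adjoint (1\<^sub>m 3))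
          (1\<^sub>m 3 * mat_diag 3 (\<lambda>i. complex_of_real (q i)) * mat_adjoint (1\<^sub>m 3)) = classical_renyi \<alpha> 3 p q"
      unfolding is_quantum_renyi_def using un pv by blast
    then have "D \<rho> \<sigma> = ereal (L / (1 - \<alpha>))" unfolding conj_one_diag cl \<rho>_def \<sigma>_def .
    thus False using that blt by simp
  qed
  show ?thesis using notQ[where D="D_bar \<alpha>", OF bar] notQ[where D="D_hat \<alpha>", OF hat] by simp
qed

end
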